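(* Let $\hat T^{\downarrow}_k$ be a random ranked plane tree with $k$ leaves produced by a Markov splitting model, let $\hat T_k$ be its underlying plane tree and $T_k$ its underlying (non-plane, unranked) tree. Suppose the model is split-exchangeable (i.e. $\Pr\{\hat T^{\downarrow}_k=\hat t^{\downarrow}_k\}$ is the same for all ranked plane trees with the same underlying plane tree) and plane-invariant (i.e. $\Pr\{\hat T_k=\hat t_k\}$ is the same for all plane trees with the same underlying tree). Then for every tree $t_k$ with $k$ leaves, \[ \Pr\{T_k=t_k\}=B(t_k)\times 2^{k-1-s(t_k)}\times\Pr\{\hat T^{\downarrow}_k=\hat t^{\downarrow}_k\}, \] where $\hat t^{\downarrow}_k$ is any ranked plane tree whose underlying tree is $t_k$, $B(t_k)=(k-1)!/\prod_{u\in\breve V(t_k)}\lfloor t_k(u)\rfloor$ ($\breve V(t_k)$ the internal nodes, $\lfloor t_k(u)\rfloor$ the number of internal nodes of the subtree rooted at $u$), and $s(t_k)$ is the number of internal nodes of $t_k$ whose two child subtrees are isomorphic.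
   Context: All trees are finite, rooted, binary. A plane tree has the two children of each internal node ordered left/right; forgetting this order gives a (non-plane) tree, up to rooted isomorphism. An internal ranking labels the $k-1$ internal nodes bijectively by $\{1,\dots,k-1\}$ with root rank $1$ and ranks increasing along paths away from the root; a ranked plane tree is a plane tree with an internal ranking. A splitting process starts from a single root leaf and, at step $i=1,\dots,k-1$, chooses one current leaf at random, gives it rank $i$ and attaches a new left leaf and a new right leaf; the result is a random ranked plane tree with $k$ leaves. Equivalently, encoding plane trees by dyadic partitions of $[0,1]$ obtained by recursive midpoint bisection, the process is a sequence of interval bisections. It is a Markov splitting model if the conditional probability of which leaf is split next depends on the history only through the current (unranked) plane tree, i.e. the current partition. *)

theory Defs
  imports Complex_Main
begin

datatype ptree = Leaf | Node ptree ptree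

text \<open>Addresses of nodes: paths from the root, False = left child, True = right child.\<close>
type_synonym addr = "bool list"

fun nleaves :: "ptree \<Rightarrow> nat" where
  "nleaves Leaf = 1"
| "nleaves (Node l r) = nleaves l + nleaves r"

fun leaves :: "ptree \<Rightarrow> addr set" where
  "leaves Leaf = {[]}"
| "leaves (Node l r) = (Cons False) ` leaves l \<union> (Cons True) ` leaves r"

fun internal :: "ptree \<Rightarrow> addr set" where
  "internal Leaf = {}"
| "internal (Node l r) = insert [] ((Cons False) ` internal l \<union> (Cons True) ` internal r)"

fun subtree :: "ptree \<Rightarrow> addr \<Rightarrow> ptree" where
  "subtree t [] = t"
| "subtree (Node l r) (False # a) = subtree l a"
| "subtree (Node l r) (True # a) = subtree r a"
| "subtree Leaf (_ # _) = Leaf"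

fun lchild :: "ptree \<Rightarrow> ptree" where
  "lchild Leaf = Leaf" | "lchild (Node l r) = l"
fun rchild :: "ptree \<Rightarrow> ptree" where
  "rchild Leaf = Leaf" | "rchild (Node l r) = r"

text \<open>Rooted isomorphism: forgetting the left/right order. A (non-plane) tree is
  represented by any plane tree; two plane trees have the same underlying tree iff iso.\<close>
fun iso :: "ptree \<Rightarrow> ptree \<Rightarrow> bool" where
  "iso Leaf Leaf = True"
| "iso (Node a b) (Node c d) = ((iso a c \<and> iso b d) \<or> (iso a d \<and> iso b c))"
| "iso _ _ = False"

text \<open>An internal ranking of t: bijection of internal nodes onto {1..k-1}, root rank 1,
  ranks increasing away from the root; value 0 outside internal nodes (canonical form).\<close>
definition is_ranking :: "ptree \<Rightarrow> (addr \<Rightarrow> nat) \<Rightarrow> bool" where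
  "is_ranking t r \<longleftrightarrow>
     bij_betw r (internal t) {1 .. nleaves t - 1}
   \<and> (t \<noteq> Leaf \<longrightarrow> r [] = 1)
   \<and> (\<forall>a b. a \<in> internal t \<longrightarrow> a @ [b] \<in> internal t \<longrightarrow> r a < r (a @ [b]))
   \<and> (\<forall>a. a \<notin> internal t \<longrightarrow> r a = 0)"

fun split_at :: "ptree \<Rightarrow> addr \<Rightarrow> ptree" where
  "split_at Leaf [] = Node Leaf Leaf"
| "split_at (Node l r) (False # a) = Node (split_at l a) r"
| "split_at (Node l r) (True # a) = Node l (split_at r a)"
| "split_at t _ = t"

definition grow :: "addr list \<Rightarrow> ptree" where
  "grow xs = foldl split_at Leaf xs"

definition valid_seq :: "addr list \<Rightarrow> bool" where
  "valid_seq xs \<longleftrightarrow> (\<forall>i < length xs. xs ! i \<in> leaves (grow (take i xs)))"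

definition rank_of :: "addr list \<Rightarrow> addr \<Rightarrow> nat" where
  "rank_of xs a = (if a \<in> set xs then Suc (hd [i. i \<leftarrow> [0..<length xs], xs ! i = a]) else 0)"

text \<open>A Markov splitting model: for each current plane tree t a probability
  distribution q t on its leaves (which leaf is split next).\<close>
definition markov_model :: "(ptree \<Rightarrow> addr \<Rightarrow> real) \<Rightarrow> bool" where
  "markov_model q \<longleftrightarrow> (\<forall>t. (\<forall>a \<in> leaves t. q t a \<ge> 0) \<and> (\<Sum>a \<in> leaves t. q t a) = 1)"

definition seq_prob :: "(ptree \<Rightarrow> addr \<Rightarrow> real) \<Rightarrow> addr list \<Rightarrow> real" where
  "seq_prob q xs = (\<Prod>i < length xs. q (grow (take i xs)) (xs ! i))"

definition histories :: "nat \<Rightarrow> addr list set" where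
  "histories k = {xs. valid_seq xs \<and> length xs = k - 1}"

definition P_ranked :: "(ptree \<Rightarrow> addr \<Rightarrow> real) \<Rightarrow> nat \<Rightarrow> ptree \<Rightarrow> (addr \<Rightarrow> nat) \<Rightarrow> real" where
  "P_ranked q k t r = (\<Sum>xs \<in> {xs \<in> histories k. grow xs = t \<and> rank_of xs = r}. seq_prob q xs)"

definition P_plane :: "(ptree \<Rightarrow> addr \<Rightarrow> real) \<Rightarrow> nat \<Rightarrow> ptree \<Rightarrow> real" where
  "P_plane q k t = (\<Sum>xs \<in> {xs \<in> histories k. grow xs = t}. seq_prob q xs)"

definition P_tree :: "(ptree \<Rightarrow> addr \<Rightarrow> real) \<Rightarrow> nat \<Rightarrow> ptree \<Rightarrow> real" where
  "P_tree q k t = (\<Sum>xs \<in> {xs \<in> histories k. iso (grow xs) t}. seq_prob q xs)"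

definition split_exchangeable :: "(ptree \<Rightarrow> addr \<Rightarrow> real) \<Rightarrow> nat \<Rightarrow> bool" where
  "split_exchangeable q k \<longleftrightarrow>
     (\<forall>t r1 r2. nleaves t = k \<longrightarrow> is_ranking t r1 \<longrightarrow> is_ranking t r2 \<longrightarrow>
        P_ranked q k t r1 = P_ranked q k t r2)"

definition plane_invariant :: "(ptree \<Rightarrow> addr \<Rightarrow> real) \<Rightarrow> nat \<Rightarrow> bool" where
  "plane_invariant q k \<longleftrightarrow>
     (\<forall>t1 t2. nleaves t1 = k \<longrightarrow> nleaves t2 = k \<longrightarrow> iso t1 t2 \<longrightarrow>
        P_plane q k t1 = P_plane q k t2)"

definition Bcoef :: "ptree \<Rightarrow> real" where
  "Bcoef t = fact (nleaves t - 1) / (\<Prod>u \<in> internal t. real (card (internal (subtree t u))))"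

definition s_sym :: "ptree \<Rightarrow> nat" where
  "s_sym t = card {u \<in> internal t. iso (lchild (subtree t u)) (rchild (subtree t u))}"

end

theory Submission
  imports Defs
begin


lemma finite_internal[simp]: "finite (internal t)"
  by (induction t) auto
lemma finite_leaves[simp]: "finite (leaves t)"
  by (induction t) auto

lemma card_internal_Node: "card (internal (Node l r)) = Suc (card (internal l) + card (internal r))"
proof -
  have "card (Cons False ` internal l \<union> Cons True ` internal r) = card (internal l) + card (internal r)"
    by (subst card_Un_disjoint) (auto simp: card_image)
  then show ?thesis by (simp add: card_insert_if) auto
qed

lemma nleaves_internal: "nleaves t = Suc (card (internal t))"
proof (induction t)
  case (Node l r) then show ?case by (simp only: nleaves.simps card_internal_Node)
qed simp

lemma leaves_internal_disj: "a \<in> leaves s \<Longrightarrow> a \<notin> internal s"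
  by (induction s arbitrary: a) auto

lemma internal_split_at: "a \<in> leaves s \<Longrightarrow> internal (split_at s a) = insert a (internal s)"
  by (induction s arbitrary: a) auto

lemma internal_inj: "internal s = internal t \<Longrightarrow> s = t"
proof (induction s arbitrary: t)
  case Leaf then show ?case by (cases t) auto
next
  case (Node l r)
  then obtain c d where t: "t = Node c d" by (cases t) auto
  have "internal l = {a. False # a \<in> internal (Node l r)}" by auto
  also have "\<dots> = internal c" using Node.prems t by auto
  finally have 1: "l = c" using Node.IH by blast
  have "internal r = {a. True # a \<in> internal (Node l r)}" by auto
  also have "\<dots> = internal d" using Node.prems t by auto
  finally have 2: "r = d" using Node.IH by blast
  show ?case using 1 2 t by simp
qed

lemma internal_prefix_closed: "a @ v \<in> internal t \<Longrightarrow> a \<in> internal t"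
proof (induction t arbitrary: a)
  case Leaf then show ?case by simp
next
  case (Node l r) then show ?case by (cases a) auto
qed

lemma leaf_no_internal_below: "a \<in> leaves s \<Longrightarrow> a @ v \<notin> internal s"
  using internal_prefix_closed leaves_internal_disj by blast

lemma leaves_antichain: "a \<in> leaves s \<Longrightarrow> a @ v \<in> leaves s \<Longrightarrow> v = []"
proof (induction s arbitrary: a)
  case Leaf then show ?case by simp
next
  case (Node l r) then show ?case by (cases a) auto
qed

lemma leaf_parent_internal: "c @ [b] \<in> leaves s \<Longrightarrow> c \<in> internal s"
proof (induction s arbitrary: c)
  case Leaf then show ?case by simp
next
  case (Node l r) then show ?case by (cases c) auto
qed

lemma exists_leaf_prefix: "u \<notin> internal s \<Longrightarrow> \<exists>a \<in> leaves s. \<exists>v. u = a @ v"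
proof (induction s arbitrary: u)
  case Leaf then show ?case by simp
next
  case (Node l r)
  then obtain x u' where u: "u = x # u'" by (cases u) auto
  show ?case
  proof (cases x)
    case True
    with Node.prems u have "u' \<notin> internal r" by auto
    with Node.IH(2) obtain a v where "a \<in> leaves r" "u' = a @ v" by blast
    then show ?thesis using u True by (intro bexI[of _ "True # a"]) auto
  next
    case False
    with Node.prems u have "u' \<notin> internal l" by auto
    with Node.IH(1) obtain a v where "a \<in> leaves l" "u' = a @ v" by blast
    then show ?thesis using u False by (intro bexI[of _ "False # a"]) auto
  qed
qed

lemma internal_subtree: "internal (subtree t u) = {v. u @ v \<in> internal t}"
proof (induction t u rule: subtree.induct)
qed auto



fun vf :: "ptree \<Rightarrow> addr list \<Rightarrow> bool" where
  "vf s [] = True"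
| "vf s (a # xs) = (a \<in> leaves s \<and> vf (split_at s a) xs)"

lemma vf_iff: "(\<forall>i < length xs. xs ! i \<in> leaves (foldl split_at s (take i xs))) \<longleftrightarrow> vf s xs"
proof (induction xs arbitrary: s)
  case Nil then show ?case by simp
next
  case (Cons a xs)
  have "(\<forall>i < length (a # xs). (a # xs) ! i \<in> leaves (foldl split_at s (take i (a # xs))))
     \<longleftrightarrow> a \<in> leaves s \<and> (\<forall>i < length xs. xs ! i \<in> leaves (foldl split_at (split_at s a) (take i xs)))"
    by (simp only: length_Cons All_less_Suc2) simp
  then show ?case using Cons.IH by simp
qed

lemma valid_seq_vf: "valid_seq xs \<longleftrightarrow> vf Leaf xs"
  unfolding valid_seq_def grow_def using vf_iff by blast

lemma vf_append: "vf s (xs @ ys) \<longleftrightarrow> vf s xs \<and> vf (foldl split_at s xs) ys"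
  by (induction xs arbitrary: s) auto

lemma vf_internal:
  "vf s xs \<Longrightarrow> internal (foldl split_at s xs) = internal s \<union> set xs \<and> distinct xs \<and> set xs \<inter> internal s = {}"
proof (induction xs arbitrary: s)
  case Nil then show ?case by simp
next
  case (Cons a xs)
  then have a: "a \<in> leaves s" and v: "vf (split_at s a) xs" by auto
  have ia: "internal (split_at s a) = insert a (internal s)" using internal_split_at[OF a] .
  from Cons.IH[OF v] ia leaves_internal_disj[OF a] show ?case by auto
qed

definition H :: "ptree \<Rightarrow> ptree \<Rightarrow> addr list set" where
  "H s t = {xs. vf s xs \<and> foldl split_at s xs = t}"

lemma H_finite: "finite (H s t)"
proof -
  have "H s t \<subseteq> {xs. set xs \<subseteq> internal t \<and> length xs \<le> card (internal t)}"
  proof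
    fix xs assume "xs \<in> H s t"
    then have v: "vf s xs" and f: "foldl split_at s xs = t" unfolding H_def by auto
    have st: "set xs \<subseteq> internal t" and d: "distinct xs" using vf_internal[OF v] f by auto
    have "length xs \<le> card (internal t)"
      using card_mono[OF finite_internal st] distinct_card[OF d] by simp
    then show "xs \<in> {xs. set xs \<subseteq> internal t \<and> length xs \<le> card (internal t)}" using st by simp
  qed
  then show ?thesis by (rule finite_subset) (simp add: finite_lists_length_le)
qed

definition hk :: "ptree \<Rightarrow> addr \<Rightarrow> nat" where
  "hk t u = card (internal (subtree t u))"

lemma hk_alt: "hk t a = card {u \<in> internal t. \<exists>v. u = a @ v}"
proof -
  have "{u \<in> internal t. \<exists>v. u = a @ v} = (append a) ` {v. a @ v \<in> internal t}" by auto
  then show ?thesis unfolding hk_def internal_subtree by (simp add: card_image inj_on_def)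
qed

lemma sum_hk:
  assumes "internal s \<subseteq> internal t"
  shows "(\<Sum>a \<in> leaves s \<inter> internal t. hk t a) = card (internal t - internal s)"
proof -
  let ?A = "\<lambda>a. {u \<in> internal t. \<exists>v. u = a @ v}"
  have U: "(\<Union>a \<in> leaves s \<inter> internal t. ?A a) = internal t - internal s"
  proof
    show "(\<Union>a \<in> leaves s \<inter> internal t. ?A a) \<subseteq> internal t - internal s"
      using leaf_no_internal_below by blast
    show "internal t - internal s \<subseteq> (\<Union>a \<in> leaves s \<inter> internal t. ?A a)"
    proof
      fix u assume u: "u \<in> internal t - internal s"
      then obtain a v where "a \<in> leaves s" "u = a @ v" using exists_leaf_prefix by blast
      moreover then have "a \<in> internal t" using u internal_prefix_closed by blast
      ultimately show "u \<in> (\<Union>a \<in> leaves s \<inter> internal t. ?A a)" using u by blast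
    qed
  qed
  have D: "\<forall>a \<in> leaves s \<inter> internal t. \<forall>b \<in> leaves s \<inter> internal t. a \<noteq> b \<longrightarrow> ?A a \<inter> ?A b = {}"
  proof (intro ballI impI)
    fix a b assume a: "a \<in> leaves s \<inter> internal t" and b: "b \<in> leaves s \<inter> internal t" and ab: "a \<noteq> b"
    show "?A a \<inter> ?A b = {}"
    proof (rule ccontr)
      assume "?A a \<inter> ?A b \<noteq> {}"
      then obtain v w where "a @ v = b @ w" by blast
      then obtain z where "a = b @ z \<or> b = a @ z" by (metis append_eq_append_conv2)
      then show False using a b ab leaves_antichain by auto
    qed
  qed
  have "(\<Sum>a \<in> leaves s \<inter> internal t. hk t a) = (\<Sum>a \<in> leaves s \<inter> internal t. card (?A a))"
    by (simp add: hk_alt)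
  also have "\<dots> = card (\<Union>a \<in> leaves s \<inter> internal t. ?A a)"
    by (rule card_UN_disjoint[symmetric]) (use D in auto)
  finally show ?thesis using U by simp
qed

lemma H_same: "H s s = {[]}"
proof -
  have "xs = []" if "vf s xs" "foldl split_at s xs = s" for xs
    using vf_internal[OF that(1)] that(2) by (metis Int_absorb2 Un_upper2 set_empty2)
  then show ?thesis unfolding H_def by auto
qed

lemma H_step:
  assumes "s \<noteq> t"
  shows "H s t = (\<Union>a \<in> leaves s \<inter> internal t. Cons a ` H (split_at s a) t)"
proof
  show "H s t \<subseteq> (\<Union>a \<in> leaves s \<inter> internal t. Cons a ` H (split_at s a) t)"
  proof
    fix xs assume "xs \<in> H s t"
    then have v: "vf s xs" and f: "foldl split_at s xs = t" unfolding H_def by auto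
    then obtain a ys where xs: "xs = a # ys" using assms by (cases xs) auto
    have "a \<in> internal t" using vf_internal[OF v] f xs by auto
    then show "xs \<in> (\<Union>a \<in> leaves s \<inter> internal t. Cons a ` H (split_at s a) t)"
      using v f xs unfolding H_def by auto
  qed
  show "(\<Union>a \<in> leaves s \<inter> internal t. Cons a ` H (split_at s a) t) \<subseteq> H s t"
    unfolding H_def by auto
qed

lemma count_H:
  assumes "internal s \<subseteq> internal t"
  shows "card (H s t) * (\<Prod>u \<in> internal t - internal s. hk t u) = fact (card (internal t - internal s))"
  using assms
proof (induction "card (internal t - internal s)" arbitrary: s rule: less_induct)
  case less
  show ?case
  proof (cases "s = t")
    case True then show ?thesis by (simp add: H_same)
  next
    case False
    let ?R = "leaves s \<inter> internal t"
    let ?D = "internal t - internal s"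
    let ?m = "card ?D"
    have Dne: "?D \<noteq> {}" using False less.prems internal_inj by blast
    then have m0: "?m > 0" by (simp add: card_gt_0_iff)
    have key: "card (H (split_at s a) t) * (\<Prod>u \<in> ?D. hk t u) = hk t a * fact (?m - 1)"
      if a: "a \<in> ?R" for a
    proof -
      have ia: "internal (split_at s a) = insert a (internal s)" using a internal_split_at by auto
      have D': "internal t - internal (split_at s a) = ?D - {a}" using ia by auto
      have aD: "a \<in> ?D" using a leaves_internal_disj by auto
      have cD: "card (?D - {a}) = ?m - 1" using aD by simp
      have sub: "internal (split_at s a) \<subseteq> internal t" using ia a less.prems by auto
      have IH: "card (H (split_at s a) t) * (\<Prod>u \<in> ?D - {a}. hk t u) = fact (?m - 1)"
        using less.hyps[of "split_at s a", OF _ sub] D' cD m0 by simp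
      have "(\<Prod>u \<in> ?D. hk t u) = hk t a * (\<Prod>u \<in> ?D - {a}. hk t u)"
        using aD by (simp add: prod.remove)
      then show ?thesis using IH by (metis mult.left_commute)
    qed
    have "card (H s t) = (\<Sum>a \<in> ?R. card (H (split_at s a) t))"
    proof -
      have "card (H s t) = card (\<Union>a \<in> ?R. Cons a ` H (split_at s a) t)"
        using H_step[OF False] by simp
      also have "\<dots> = (\<Sum>a \<in> ?R. card (Cons a ` H (split_at s a) t))"
        by (rule card_UN_disjoint) (auto simp: H_finite)
      also have "\<dots> = (\<Sum>a \<in> ?R. card (H (split_at s a) t))"
        by (simp add: card_image)
      finally show ?thesis .
    qed
    then have "card (H s t) * (\<Prod>u \<in> ?D. hk t u) = (\<Sum>a \<in> ?R. card (H (split_at s a) t) * (\<Prod>u \<in> ?D. hk t u))"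
      by (simp add: sum_distrib_right)
    also have "\<dots> = (\<Sum>a \<in> ?R. hk t a * fact (?m - 1))"
      using key by simp
    also have "\<dots> = ?m * fact (?m - 1)"
      using sum_hk[OF less.prems] by (simp add: sum_distrib_right[symmetric])
    also have "\<dots> = fact ?m" using m0 by (metis fact_reduce of_nat_id)
    finally show ?thesis .
  qed
qed



lemma iso_refl: "iso t t"
  by (induction t) auto

lemma iso_sym: "iso a b \<Longrightarrow> iso b a"
  by (induction a b rule: iso.induct) auto

lemma iso_trans: "iso a b \<Longrightarrow> iso b c \<Longrightarrow> iso a c"
proof (induction a arbitrary: b c)
  case Leaf then show ?case by (cases b; cases c) auto
next
  case (Node a1 a2)
  then obtain b1 b2 where b: "b = Node b1 b2" by (cases b) auto
  with Node.prems obtain c1 c2 where c: "c = Node c1 c2" by (cases c) auto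
  show ?case using Node.prems Node.IH unfolding b c by simp metis
qed

lemma iso_nleaves: "iso a b \<Longrightarrow> nleaves a = nleaves b"
  by (induction a b rule: iso.induct) auto

lemma iso_card_internal: "iso a b \<Longrightarrow> card (internal a) = card (internal b)"
  using iso_nleaves nleaves_internal by (metis Suc_inject)

definition hp :: "ptree \<Rightarrow> nat" where
  "hp t = (\<Prod>u \<in> internal t. hk t u)"

lemma hp_Node: "hp (Node l r) = card (internal (Node l r)) * hp l * hp r"
proof -
  have "hp (Node l r) = hk (Node l r) [] * (\<Prod>u \<in> Cons False ` internal l \<union> Cons True ` internal r. hk (Node l r) u)"
    unfolding hp_def internal.simps by (subst prod.insert) auto
  also have "(\<Prod>u \<in> Cons False ` internal l \<union> Cons True ` internal r. hk (Node l r) u)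
     = (\<Prod>u \<in> Cons False ` internal l. hk (Node l r) u) * (\<Prod>u \<in> Cons True ` internal r. hk (Node l r) u)"
    by (rule prod.union_disjoint) auto
  also have "(\<Prod>u \<in> Cons False ` internal l. hk (Node l r) u) = hp l"
    unfolding hp_def by (subst prod.reindex) (auto simp: hk_def)
  also have "(\<Prod>u \<in> Cons True ` internal r. hk (Node l r) u) = hp r"
    unfolding hp_def by (subst prod.reindex) (auto simp: hk_def)
  finally show ?thesis by (simp add: hk_def)
qed

lemma hp_Leaf: "hp Leaf = 1" by (simp add: hp_def)

lemma iso_hp: "iso a b \<Longrightarrow> hp a = hp b"
proof (induction a b rule: iso.induct)
  case (2 a b c d)
  have "card (internal (Node a b)) = card (internal (Node c d))"
    using iso_card_internal "2.prems" by blast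
  then show ?case using 2 by (auto simp: hp_Node)
qed auto

lemma iso_Bcoef: "Bcoef a = Bcoef b" if "iso a b"
proof -
  have "Bcoef t = fact (nleaves t - 1) / real (hp t)" for t
    unfolding Bcoef_def hp_def hk_def by simp
  then show ?thesis using iso_hp iso_nleaves that by metis
qed

lemma s_sym_Leaf: "s_sym Leaf = 0" by (simp add: s_sym_def)

lemma s_sym_Node: "s_sym (Node l r) = (if iso l r then 1 else 0) + s_sym l + s_sym r"
proof -
  let ?P = "\<lambda>t u. iso (lchild (subtree t u)) (rchild (subtree t u))"
  have e: "{u \<in> internal (Node l r). ?P (Node l r) u}
    = (if iso l r then {[]} else {}) \<union> (Cons False ` {u \<in> internal l. ?P l u} \<union> Cons True ` {u \<in> internal r. ?P r u})"
    by auto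
  have c2: "card (Cons False ` {u \<in> internal l. ?P l u} \<union> Cons True ` {u \<in> internal r. ?P r u}) = s_sym l + s_sym r"
    unfolding s_sym_def by (subst card_Un_disjoint) (auto simp: card_image)
  show ?thesis unfolding s_sym_def[of "Node l r"] e
    using c2 by (subst card_Un_disjoint) (auto simp: s_sym_def)
qed

lemma s_sym_le: "s_sym t \<le> card (internal t)"
  unfolding s_sym_def by (rule card_mono) auto

lemma card_iso_class: "card {u. iso u t} = 2 ^ (card (internal t) - s_sym t)"
proof (induction t)
  case Leaf
  have "{u. iso u Leaf} = {Leaf}" by (auto elim: iso.elims)
  then show ?case by simp
next
  case (Node l r)
  let ?L = "{a. iso a l}" and ?R = "{a. iso a r}"
  have fL: "finite ?L" using Node.IH(1) by (metis card.infinite power_not_zero zero_neq_numeral)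
  have fR: "finite ?R" using Node.IH(2) by (metis card.infinite power_not_zero zero_neq_numeral)
  have e: "{u. iso u (Node l r)} = case_prod Node ` (?L \<times> ?R \<union> ?R \<times> ?L)"
  proof
    show "{u. iso u (Node l r)} \<subseteq> case_prod Node ` (?L \<times> ?R \<union> ?R \<times> ?L)"
    proof
      fix u assume "u \<in> {u. iso u (Node l r)}"
      then obtain a b where "u = Node a b" "(iso a l \<and> iso b r) \<or> (iso a r \<and> iso b l)"
        by (cases u) auto
      then show "u \<in> case_prod Node ` (?L \<times> ?R \<union> ?R \<times> ?L)" by auto
    qed
  qed auto
  have inj: "inj (case_prod Node)" by (auto simp: inj_on_def)
  have cI: "card (internal (Node l r)) = Suc (card (internal l) + card (internal r))"
    by (rule card_internal_Node)
  have sl: "s_sym l \<le> card (internal l)" and sr: "s_sym r \<le> card (internal r)" by (rule s_sym_le)+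
  show ?case
  proof (cases "iso l r")
    case True
    then have "?L = ?R" using iso_trans iso_sym by blast
    then have "card {u. iso u (Node l r)} = card ?L * card ?R"
      unfolding e by (simp add: card_image inj_on_subset[OF inj] card_cartesian_product)
    also have "\<dots> = 2 ^ (card (internal l) - s_sym l + (card (internal r) - s_sym r))"
      using Node.IH by (simp add: power_add)
    finally show ?thesis using True sl sr cI by (simp add: s_sym_Node)
  next
    case False
    have disj: "?L \<times> ?R \<inter> ?R \<times> ?L = {}" using False iso_trans iso_sym by blast
    have "card {u. iso u (Node l r)} = card (?L \<times> ?R) + card (?R \<times> ?L)"
      unfolding e using fL fR disj
      by (simp add: card_image inj_on_subset[OF inj] card_Un_disjoint)
    also have "\<dots> = 2 * (card ?L * card ?R)" by (simp add: card_cartesian_product)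
    also have "\<dots> = 2 ^ Suc (card (internal l) - s_sym l + (card (internal r) - s_sym r))"
      using Node.IH by (simp add: power_add)
    moreover have "s_sym l + s_sym r \<le> card (internal l) + card (internal r)" using sl sr by simp
    ultimately show ?thesis using False sl sr cI by (simp add: s_sym_Node Suc_diff_le)
  qed
qed

lemma finite_iso_class: "finite {u. iso u t}"
  using card_iso_class by (metis card.infinite power_not_zero zero_neq_numeral)



lemma concat_map_filter: "concat (map (\<lambda>j. if P j then [j] else []) L) = filter P L"
  by (induction L) auto

lemma filter_upt_eq: "i < n \<Longrightarrow> filter (\<lambda>j. j = i) [0..<n] = [i]"
proof (induction n)
  case 0 then show ?case by simp
next
  case (Suc n)
  show ?case
  proof (cases "i < n")
    case True then show ?thesis using Suc by simp
  next
    case False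
    then have "i = n" using Suc by simp
    moreover have "filter (\<lambda>j. j = n) [0..<n] = []" by (simp add: filter_empty_conv)
    ultimately show ?thesis by simp
  qed
qed

lemma rank_nth:
  assumes "distinct xs" "i < length xs"
  shows "rank_of xs (xs ! i) = Suc i"
proof -
  have "[j. j \<leftarrow> [0..<length xs], xs ! j = xs ! i] = filter (\<lambda>j. xs ! j = xs ! i) [0..<length xs]"
    by (simp add: concat_map_filter)
  also have "\<dots> = filter (\<lambda>j. j = i) [0..<length xs]"
    using assms by (auto simp: nth_eq_iff_index_eq intro!: filter_cong)
  also have "\<dots> = [i]"
    using assms(2) by (rule filter_upt_eq)
  finally show ?thesis using assms unfolding rank_of_def by auto
qed

lemma H_Leaf:
  assumes "xs \<in> H Leaf t"
  shows "set xs = internal t" "distinct xs" "length xs = card (internal t)" "vf Leaf xs" "grow xs = t"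
proof -
  have v: "vf Leaf xs" and f: "foldl split_at Leaf xs = t" using assms unfolding H_def by auto
  show "set xs = internal t" "distinct xs" using vf_internal[OF v] f by auto
  then show "length xs = card (internal t)" using distinct_card by metis
  show "vf Leaf xs" "grow xs = t" using v f by (auto simp: grow_def)
qed

lemma rank_inj:
  assumes "xs \<in> H Leaf t" "ys \<in> H Leaf t" "rank_of xs = rank_of ys"
  shows "xs = ys"
proof (rule nth_equalityI)
  note X = H_Leaf[OF assms(1)] and Y = H_Leaf[OF assms(2)]
  show len: "length xs = length ys" using X Y by simp
  fix i assume i: "i < length xs"
  have "rank_of ys (xs ! i) = Suc i" using rank_nth[OF X(2) i] assms(3) by simp
  then have "xs ! i \<in> set ys" unfolding rank_of_def by (auto split: if_splits)
  then obtain j where j: "j < length ys" "xs ! i = ys ! j" by (auto simp: in_set_conv_nth)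
  then have "rank_of ys (xs ! i) = Suc j" using rank_nth[OF Y(2)] by simp
  then have "j = i" using \<open>rank_of ys (xs ! i) = Suc i\<close> by simp
  then show "xs ! i = ys ! i" using j by simp
qed

lemma rank_is_ranking:
  assumes "xs \<in> H Leaf t"
  shows "is_ranking t (rank_of xs)"
proof -
  note X = H_Leaf[OF assms]
  have nl: "nleaves t - 1 = length xs" using X(3) nleaves_internal by simp
  have img: "rank_of xs ` set xs = {1..length xs}"
  proof -
    have "rank_of xs ` set xs = (\<lambda>i. rank_of xs (xs ! i)) ` {..<length xs}"
      unfolding set_conv_nth by auto
    also have "\<dots> = Suc ` {..<length xs}" using rank_nth[OF X(2)] by auto
    also have "\<dots> = {1..length xs}" by (simp add: image_Suc_lessThan)
    finally show ?thesis .
  qed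
  have inj: "inj_on (rank_of xs) (set xs)"
  proof
    fix a b assume a: "a \<in> set xs" and b: "b \<in> set xs" and e: "rank_of xs a = rank_of xs b"
    obtain i where i: "i < length xs" "a = xs ! i" using a by (auto simp: in_set_conv_nth)
    obtain j where j: "j < length xs" "b = xs ! j" using b by (auto simp: in_set_conv_nth)
    show "a = b" using e rank_nth[OF X(2) i(1)] rank_nth[OF X(2) j(1)] i j by simp
  qed
  have bij: "bij_betw (rank_of xs) (internal t) {1 .. nleaves t - 1}"
    unfolding bij_betw_def using inj img X(1) nl by simp
  have root: "t \<noteq> Leaf \<longrightarrow> rank_of xs [] = 1"
  proof
    assume "t \<noteq> Leaf"
    then obtain a ys where xs: "xs = a # ys" using X(5) by (cases xs) (auto simp: grow_def)
    then have "a = []" using X(4) by simp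
    then show "rank_of xs [] = 1" using rank_nth[OF X(2), of 0] xs by simp
  qed
  have mono: "\<forall>a b. a \<in> internal t \<longrightarrow> a @ [b] \<in> internal t \<longrightarrow> rank_of xs a < rank_of xs (a @ [b])"
  proof (intro allI impI)
    fix a b assume a: "a \<in> internal t" and ab: "a @ [b] \<in> internal t"
    obtain j where j: "j < length xs" "a @ [b] = xs ! j" using ab X(1) by (metis in_set_conv_nth)
    have "vf Leaf (take j xs @ drop j xs)" using X(4) by simp
    then have v1: "vf Leaf (take j xs)" and v2: "vf (foldl split_at Leaf (take j xs)) (drop j xs)"
      using vf_append by blast+
    have "xs ! j \<in> leaves (foldl split_at Leaf (take j xs))"
    proof -
      have "drop j xs = xs ! j # drop (Suc j) xs" using Cons_nth_drop_Suc[OF j(1)] by simp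
      with v2 show ?thesis by (metis vf.simps(2))
    qed
    then have "a \<in> internal (foldl split_at Leaf (take j xs))" using j(2) leaf_parent_internal by metis
    then have "a \<in> set (take j xs)" using vf_internal[OF v1] by simp
    then obtain i where i: "i < j" "a = xs ! i" using j(1) by (auto simp: in_set_conv_nth)
    show "rank_of xs a < rank_of xs (a @ [b])"
      using rank_nth[OF X(2)] i j by simp
  qed
  have zero: "\<forall>a. a \<notin> internal t \<longrightarrow> rank_of xs a = 0"
    using X(1) unfolding rank_of_def by simp
  show ?thesis unfolding is_ranking_def using bij root mono zero by blast
qed



lemma hist_eq: "nleaves t = k \<Longrightarrow> {xs \<in> histories k. grow xs = t} = H Leaf t"
proof
  assume k: "nleaves t = k"
  show "{xs \<in> histories k. grow xs = t} \<subseteq> H Leaf t"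
    unfolding histories_def H_def grow_def valid_seq_vf by auto
  show "H Leaf t \<subseteq> {xs \<in> histories k. grow xs = t}"
  proof
    fix xs assume xs: "xs \<in> H Leaf t"
    note X = H_Leaf[OF xs]
    show "xs \<in> {xs \<in> histories k. grow xs = t}"
      using X k nleaves_internal[of t] unfolding histories_def valid_seq_vf by simp
  qed
qed

lemma card_H_Bcoef: "real (card (H Leaf t)) = Bcoef t"
proof -
  have c: "card (H Leaf t) * hp t = fact (card (internal t))"
    using count_H[of Leaf t] unfolding hp_def by simp
  have "hk t u > 0" if "u \<in> internal t" for u
  proof -
    have "[] \<in> internal (subtree t u)" using that internal_subtree by simp
    then show ?thesis unfolding hk_def by (auto simp: card_gt_0_iff)
  qed
  then have hp0: "hp t > 0" unfolding hp_def by (simp add: prod_pos)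
  have "real (card (H Leaf t)) * real (hp t) = fact (card (internal t))"
    using arg_cong[OF c, of real] by (simp add: of_nat_mult)
  then have "real (card (H Leaf t)) = fact (card (internal t)) / real (hp t)"
    using hp0 by (simp add: field_simps)
  moreover have "Bcoef t = fact (nleaves t - 1) / real (hp t)"
    unfolding Bcoef_def hp_def hk_def by simp
  ultimately show ?thesis using nleaves_internal[of t] by simp
qed

lemma P_plane_eq:
  assumes se: "split_exchangeable q k" and k: "nleaves t = k" and r: "is_ranking t r"
  shows "P_plane q k t = Bcoef t * P_ranked q k t r"
proof -
  have "P_plane q k t = (\<Sum>xs \<in> H Leaf t. seq_prob q xs)"
    unfolding P_plane_def hist_eq[OF k] ..
  also have "\<dots> = (\<Sum>xs \<in> H Leaf t. P_ranked q k t r)"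
  proof (rule sum.cong[OF refl])
    fix xs assume xs: "xs \<in> H Leaf t"
    have "{ys \<in> histories k. grow ys = t \<and> rank_of ys = rank_of xs} = {xs}"
      using hist_eq[OF k] xs rank_inj[OF _ xs] by auto
    then have "P_ranked q k t (rank_of xs) = seq_prob q xs"
      unfolding P_ranked_def by simp
    moreover have "P_ranked q k t (rank_of xs) = P_ranked q k t r"
      using se k rank_is_ranking[OF xs] r unfolding split_exchangeable_def by blast
    ultimately show "seq_prob q xs = P_ranked q k t r" by simp
  qed
  also have "\<dots> = real (card (H Leaf t)) * P_ranked q k t r" by simp
  finally show ?thesis using card_H_Bcoef by simp
qed

theorem theorem4p2:
  fixes q :: "ptree \<Rightarrow> addr \<Rightarrow> real" and k :: nat and t t' :: ptree and r :: "addr \<Rightarrow> nat"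
  assumes "markov_model q"
    and "split_exchangeable q k"
    and "plane_invariant q k"
    and "nleaves t = k"
    and "iso t' t"
    and "is_ranking t' r"
  shows "P_tree q k t = Bcoef t * 2 ^ (k - 1 - s_sym t) * P_ranked q k t' r"
proof -
  let ?T = "{u. iso u t}"
  have kT: "nleaves u = k" if "u \<in> ?T" for u using that iso_nleaves assms(4) by auto
  have k': "nleaves t' = k" using assms(4,5) iso_nleaves by auto
  have U: "{xs \<in> histories k. iso (grow xs) t} = (\<Union>u \<in> ?T. H Leaf u)"
  proof -
    have "{xs \<in> histories k. iso (grow xs) t} = (\<Union>u \<in> ?T. {xs \<in> histories k. grow xs = u})" by auto
    also have "\<dots> = (\<Union>u \<in> ?T. H Leaf u)" using hist_eq kT by auto
    finally show ?thesis .
  qed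
  have "P_tree q k t = (\<Sum>u \<in> ?T. \<Sum>xs \<in> H Leaf u. seq_prob q xs)"
    unfolding P_tree_def U
    by (rule sum.UNION_disjoint) (auto simp: finite_iso_class H_finite, auto simp: H_def)
  also have "\<dots> = (\<Sum>u \<in> ?T. P_plane q k t')"
  proof (rule sum.cong[OF refl])
    fix u assume u: "u \<in> ?T"
    have "(\<Sum>xs \<in> H Leaf u. seq_prob q xs) = P_plane q k u"
      unfolding P_plane_def hist_eq[OF kT[OF u]] ..
    also have "\<dots> = P_plane q k t'"
      using assms(3) kT[OF u] k' u assms(5) iso_sym iso_trans unfolding plane_invariant_def by blast
    finally show "(\<Sum>xs \<in> H Leaf u. seq_prob q xs) = P_plane q k t'" .
  qed
  also have "\<dots> = real (card ?T) * (Bcoef t' * P_ranked q k t' r)"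
    using P_plane_eq[OF assms(2) k' assms(6)] by simp
  also have "Bcoef t' = Bcoef t" using iso_Bcoef assms(5) by blast
  also have "card ?T = 2 ^ (k - 1 - s_sym t)"
    using card_iso_class[of t] nleaves_internal[of t] assms(4) by simp
  finally show ?thesis by simp
qed

end
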